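(* Let $h=8/15$, $a=3/15$, and for $p,q,r\in(0,1/36)$ let $K_{pqr}$ be the attractor of $\mathcal S_{pqr}=\{S_1,\dots,S_6\}$ with $S_1(x)=px$, $S_2(x)=a+rx$, $S_3(x)=h-qx$, $S_4(x)=h-r+rx$, $S_5(x)=1-a-rx$, $S_6(x)=1-r+rx$. Say $\mathcal S_{pqr}$ has unique one-point intersection if $S_3(K_{pqr})\cap S_4(K_{pqr})=\{h\}$. Then for each $r\in(0,1/36)$, the set of $(p,q)\in(0,r)^2$ for which $\mathcal S_{pqr}$ has unique one-point intersection has full Lebesgue measure in $(0,r)^2$, and for each $p\in(0,r)$ the set of $q\in(0,r)$ for which $\mathcal S_{pqr}$ has unique one-point intersection has full Lebesgue measure in $(0,r)$.
   Context: By construction, all pieces $S_i(K_{pqr})$, $i=1,\dots,6$, are pairwise disjoint except possibly $S_3(K_{pqr})$ and $S_4(K_{pqr})$, whose intersection always contains $h$. *)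

theory Defs
  imports "HOL-Analysis.Analysis"
begin

definition attractor :: "(real \<Rightarrow> real) set \<Rightarrow> real set" where
  "attractor F = (THE K. compact K \<and> K \<noteq> {} \<and> K = (\<Union>f\<in>F. f ` K))"

definition hh :: real where "hh = 8/15"
definition aa :: real where "aa = 3/15"

definition S1 :: "real \<Rightarrow> real \<Rightarrow> real \<Rightarrow> real \<Rightarrow> real" where "S1 p q r x = p * x"
definition S2 :: "real \<Rightarrow> real \<Rightarrow> real \<Rightarrow> real \<Rightarrow> real" where "S2 p q r x = aa + r * x"
definition S3 :: "real \<Rightarrow> real \<Rightarrow> real \<Rightarrow> real \<Rightarrow> real" where "S3 p q r x = hh - q * x"
definition S4 :: "real \<Rightarrow> real \<Rightarrow> real \<Rightarrow> real \<Rightarrow> real" where "S4 p q r x = hh - r + r * x"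
definition S5 :: "real \<Rightarrow> real \<Rightarrow> real \<Rightarrow> real \<Rightarrow> real" where "S5 p q r x = 1 - aa - r * x"
definition S6 :: "real \<Rightarrow> real \<Rightarrow> real \<Rightarrow> real \<Rightarrow> real" where "S6 p q r x = 1 - r + r * x"

definition K_pqr :: "real \<Rightarrow> real \<Rightarrow> real \<Rightarrow> real set" where
  "K_pqr p q r = attractor {S1 p q r, S2 p q r, S3 p q r, S4 p q r, S5 p q r, S6 p q r}"

definition unique_one_point :: "real \<Rightarrow> real \<Rightarrow> real \<Rightarrow> bool" where
  "unique_one_point p q r \<longleftrightarrow> S3 p q r ` K_pqr p q r \<inter> S4 p q r ` K_pqr p q r = {hh}"

end

theory Submission
  imports Defs
begin


definition SF :: "(real \<Rightarrow> real \<Rightarrow> real \<Rightarrow> real \<Rightarrow> real) set" where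
  "SF = {S1,S2,S3,S4,S5,S6}"

fun Phi :: "real \<Rightarrow> nat \<Rightarrow> (real \<Rightarrow> real \<Rightarrow> real \<Rightarrow> real) set" where
  "Phi r 0 = {\<lambda>p q s. s}"
| "Phi r (Suc k) = (\<lambda>(f,g). \<lambda>p q s. f p q r (g p q s)) ` (SF \<times> Phi r k)"

definition AA :: "real \<Rightarrow> nat \<Rightarrow> real \<Rightarrow> real \<Rightarrow> real set" where
  "AA r k p q = (\<Union>g\<in>Phi r k. g p q ` {0..1})"

definition Kst :: "real \<Rightarrow> real \<Rightarrow> real \<Rightarrow> real set" where
  "Kst r p q = (\<Inter>k. AA r k p q)"

lemma SF_finite: "finite SF" and SF_card: "card SF \<le> 6"
  unfolding SF_def by (auto intro!: card_insert_le_m1)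

lemma Phi_finite: "finite (Phi r k)"
  by (induction k) (auto simp: SF_finite)

lemma Phi_card: "card (Phi r k) \<le> 6 ^ k"
proof (induction k)
  case 0 then show ?case by simp
next
  case (Suc k)
  have "card (Phi r (Suc k)) \<le> card (SF \<times> Phi r k)"
    by (simp only: Phi.simps, rule card_image_le) (simp add: SF_finite Phi_finite)
  also have "\<dots> = card SF * card (Phi r k)" by (simp add: card_cartesian_product)
  also have "\<dots> \<le> 6 * 6 ^ k" using SF_card Suc.IH by (intro mult_mono) auto
  finally show ?case by simp
qed

lemma AA_Suc: "AA r (Suc k) p q = (\<Union>f\<in>SF. f p q r ` AA r k p q)"
  unfolding AA_def by (auto simp: image_iff) 

lemma SF_into:
  assumes "f \<in> SF" "0 < p" "p < r" "0 < q" "q < r" "r < 1/36" "0 \<le> x" "x \<le> 1"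
  shows "0 \<le> f p q r x \<and> f p q r x \<le> 1"
proof -
  have px: "p * x \<le> p" "q * x \<le> q" "r * x \<le> r" using assms by (auto intro: mult_left_le)
  have nn: "0 \<le> p * x" "0 \<le> q*x" "0 \<le> r*x" using assms by auto
  then show ?thesis using assms px unfolding SF_def
    by (auto simp: S1_def S2_def S3_def S4_def S5_def S6_def hh_def aa_def) (use px nn assms in linarith)+
qed

lemma SF_lip:
  assumes "f \<in> SF" "0 < p" "p < r" "0 < q" "q < r"
  shows "\<bar>f p q r x - f p q r y\<bar> \<le> r * \<bar>x - y\<bar>"
proof -
  have e: "\<bar>c * x - c * y\<bar> = c * \<bar>x - y\<bar>" if "0 \<le> c" for c
    using that by (simp add: abs_mult right_diff_distrib[symmetric])
  have "p * \<bar>x - y\<bar> \<le> r * \<bar>x - y\<bar>" "q * \<bar>x - y\<bar> \<le> r * \<bar>x - y\<bar>"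
    using assms by (auto intro: mult_right_mono)
  then show ?thesis using assms e[of p] e[of q] e[of r] unfolding SF_def
    by (auto simp: S1_def S2_def S3_def S4_def S5_def S6_def abs_minus_commute algebra_simps)
qed

lemma SF_inj:
  assumes "f \<in> SF" "0 < p" "0 < q" "0 < r"
  shows "inj (f p q r)"
  using assms unfolding SF_def
  by (auto simp: inj_def S1_def S2_def S3_def S4_def S5_def S6_def)

lemma SF_qlip:
  assumes "f \<in> SF" "0 < p" "p < r" "0 < q1" "q1 < r" "0 < q2" "q2 < r" "0 \<le> x1" "x1 \<le> 1"
  shows "\<bar>f p q2 r x2 - f p q1 r x1\<bar> \<le> r * \<bar>x2 - x1\<bar> + \<bar>q2 - q1\<bar>"
proof -
  have "\<bar>f p q2 r x2 - f p q1 r x1\<bar> \<le> \<bar>f p q2 r x2 - f p q2 r x1\<bar> + \<bar>f p q2 r x1 - f p q1 r x1\<bar>"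
    by linarith
  moreover have "\<bar>f p q2 r x2 - f p q2 r x1\<bar> \<le> r * \<bar>x2 - x1\<bar>" using SF_lip assms by blast
  moreover have "\<bar>f p q2 r x1 - f p q1 r x1\<bar> \<le> \<bar>q2 - q1\<bar>"
  proof -
    have "\<bar>q2 * x1 - q1 * x1\<bar> = \<bar>q2 - q1\<bar> * x1" using assms by (simp add: abs_mult left_diff_distrib[symmetric])
    also have "\<dots> \<le> \<bar>q2 - q1\<bar>" using assms by (simp add: mult_left_le)
    finally show ?thesis using assms unfolding SF_def
      by (auto simp: S1_def S2_def S3_def S4_def S5_def S6_def abs_minus_commute algebra_simps)
  qed
  ultimately show ?thesis by linarith
qed

lemma SF_cont:
  assumes "f \<in> SF" "continuous_on UNIV h"
  shows "continuous_on UNIV (\<lambda>z::real\<times>real. f (fst z) (snd z) r (h z))"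
  using assms unfolding SF_def
  by (auto simp: S1_def S2_def S3_def S4_def S5_def S6_def intro!: continuous_intros)

locale prm =
  fixes p q r :: real
  assumes p0: "0 < p" and pr: "p < r" and q0: "0 < q" and qr: "q < r" and r36: "r < 1/36"
begin

lemma Phi_into: "g \<in> Phi r k \<Longrightarrow> 0 \<le> s \<Longrightarrow> s \<le> 1 \<Longrightarrow> 0 \<le> g p q s \<and> g p q s \<le> 1"
proof (induction k arbitrary: g)
  case 0 then show ?case by simp
next
  case (Suc k)
  then obtain f g0 where "f \<in> SF" "g0 \<in> Phi r k" "g = (\<lambda>p q s. f p q r (g0 p q s))" by auto
  then show ?case using Suc.IH[of g0] Suc.prems SF_into[of f p r q] p0 pr q0 qr r36 by auto
qed

lemma Phi_lip: "g \<in> Phi r k \<Longrightarrow> \<bar>g p q s - g p q t\<bar> \<le> r ^ k * \<bar>s - t\<bar>"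
proof (induction k arbitrary: g)
  case 0 then show ?case by simp
next
  case (Suc k)
  then obtain f g0 where f: "f \<in> SF" "g0 \<in> Phi r k" "g = (\<lambda>p q s. f p q r (g0 p q s))" by auto
  have "\<bar>g p q s - g p q t\<bar> \<le> r * \<bar>g0 p q s - g0 p q t\<bar>"
    using f SF_lip[of f p r q] p0 pr q0 qr by auto
  also have "\<dots> \<le> r * (r ^ k * \<bar>s - t\<bar>)"
    using Suc.IH[OF f(2)] p0 pr by (intro mult_left_mono) auto
  finally show ?case by simp
qed

lemma AA0: "AA r 0 p q = {0..1}" by (simp add: AA_def)

lemma AA_sub: "AA r k p q \<subseteq> {0..1}"
  using Phi_into unfolding AA_def by fastforce

lemma AA_dec: "AA r (Suc k) p q \<subseteq> AA r k p q"
proof (induction k)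
  case 0
  show ?case unfolding AA_Suc AA0 using SF_into p0 pr q0 qr r36 by fastforce
next
  case (Suc k)
  then show ?case unfolding AA_Suc[of r "Suc k"] unfolding AA_Suc[of r k] by blast
qed

lemma AA_mono: "k \<le> m \<Longrightarrow> AA r m p q \<subseteq> AA r k p q"
  by (induction m rule: dec_induct) (use AA_dec in auto)

lemma zero_AA: "0 \<in> AA r k p q"
proof (induction k)
  case 0 then show ?case by (simp add: AA0)
next
  case (Suc k)
  have "S1 p q r 0 = 0" by (simp add: S1_def)
  then show ?case unfolding AA_Suc SF_def using Suc by force
qed

lemma one_AA: "1 \<in> AA r k p q"
proof (induction k)
  case 0 then show ?case by (simp add: AA0)
next
  case (Suc k)
  have "S6 p q r 1 = 1" by (simp add: S6_def)
  then show ?case unfolding AA_Suc SF_def using Suc by force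
qed

lemma AA_compact: "compact (AA r k p q)"
proof -
  have "continuous_on {0..1} (g p q)" if "g \<in> Phi r k" for g
  proof -
    have "\<bar>g p q s - g p q t\<bar> \<le> r ^ k * \<bar>s - t\<bar>" for s t using Phi_lip that by blast
    then have "uniformly_continuous_on {0..1} (g p q)"
      by (intro lipschitz_on_uniformly_continuous[of "r^k"]) (use p0 pr in \<open>auto simp: lipschitz_on_def dist_real_def\<close>)
    then show ?thesis by (rule uniformly_continuous_imp_continuous)
  qed
  then show ?thesis unfolding AA_def
    by (intro compact_UN Phi_finite compact_continuous_image) auto
qed

lemma Kst_sub: "Kst r p q \<subseteq> {0..1}" using AA_sub unfolding Kst_def by blast

lemma Kst_compact: "compact (Kst r p q)"
proof -
  have "closed (Kst r p q)" unfolding Kst_def using AA_compact by (intro closed_INT) (auto intro: compact_imp_closed)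
  moreover have "bounded (Kst r p q)" using Kst_sub bounded_subset[OF compact_imp_bounded[OF compact_Icc]] by blast
  ultimately show ?thesis using compact_eq_bounded_closed by blast
qed

lemma zero_Kst: "0 \<in> Kst r p q" and one_Kst: "1 \<in> Kst r p q"
  unfolding Kst_def using zero_AA one_AA by auto

lemma Kst_fix: "Kst r p q = (\<Union>f\<in>SF. f p q r ` Kst r p q)"
proof
  show "(\<Union>f\<in>SF. f p q r ` Kst r p q) \<subseteq> Kst r p q"
  proof clarify
    fix f x assume f: "f \<in> SF" and x: "x \<in> Kst r p q"
    show "f p q r x \<in> Kst r p q" unfolding Kst_def
    proof
      fix k show "f p q r x \<in> AA r k p q"
      proof (cases k)
        case 0 then show ?thesis using x Kst_sub SF_into[OF f p0 pr q0 qr r36] AA0 by auto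
      next
        case (Suc m)
        have "x \<in> AA r m p q" using x unfolding Kst_def by blast
        then have "f p q r x \<in> (\<Union>f\<in>SF. f p q r ` AA r m p q)" using f by blast
        then show ?thesis using Suc AA_Suc by simp
      qed
    qed
  qed
next
  show "Kst r p q \<subseteq> (\<Union>f\<in>SF. f p q r ` Kst r p q)"
  proof
    fix x assume x: "x \<in> Kst r p q"
    show "x \<in> (\<Union>f\<in>SF. f p q r ` Kst r p q)"
    proof (rule ccontr)
      assume nx: "x \<notin> (\<Union>f\<in>SF. f p q r ` Kst r p q)"
      have "\<forall>f\<in>SF. \<exists>k. x \<notin> f p q r ` AA r k p q"
      proof (rule ballI, rule ccontr)
        fix f assume f: "f \<in> SF" and "\<not> (\<exists>k. x \<notin> f p q r ` AA r k p q)"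
        then have all: "\<forall>k. \<exists>z \<in> AA r k p q. f p q r z = x" by auto
        then obtain z0 where z0: "f p q r z0 = x" by blast
        have inj: "inj (f p q r)" using SF_inj[OF f p0 q0] p0 pr by auto
        have "z0 \<in> AA r k p q" for k
        proof -
          obtain z where z: "z \<in> AA r k p q" "f p q r z = x" using all by blast
          then have "z = z0" using z0 inj by (auto dest: injD)
          then show ?thesis using z by simp
        qed
        then have "z0 \<in> Kst r p q" unfolding Kst_def by blast
        then show False using nx f z0 by blast
      qed
      then obtain kf where kf: "\<forall>f\<in>SF. x \<notin> f p q r ` AA r (kf f) p q" by (rule bchoice[elim_format]) blast
      define K where "K = Max (kf ` SF)"
      have "x \<in> AA r (Suc K) p q" using x unfolding Kst_def by blast
      then have "x \<in> (\<Union>f\<in>SF. f p q r ` AA r K p q)" by (simp only: AA_Suc)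
      then obtain f where f: "f \<in> SF" "x \<in> f p q r ` AA r K p q" by blast
      have "kf f \<le> K" unfolding K_def using f(1) SF_finite by simp
      then have "AA r K p q \<subseteq> AA r (kf f) p q" by (rule AA_mono)
      then show False using f kf by blast
    qed
  qed
qed

end

lemma fix_sub:
  fixes A B :: "real set"
  assumes lip: "\<forall>f\<in>F. \<forall>x y. \<bar>f x - f y\<bar> \<le> c * \<bar>x - y\<bar>" and c: "0 \<le> c" "c < 1"
    and A: "A = (\<Union>f\<in>F. f ` A)" and B: "B = (\<Union>f\<in>F. f ` B)"
    and bA: "bounded A" and bB: "bounded B" and cB: "closed B" and ne: "B \<noteq> {}"
  shows "A \<subseteq> B"
proof -
  obtain R where R: "\<forall>x\<in>A \<union> B. \<bar>x\<bar> \<le> R" using bounded_Un[of A B] bA bB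
    unfolding bounded_iff by auto
  obtain b where b: "b \<in> B" using ne by auto
  have R0: "0 \<le> R" using R b by force
  have As: "A \<subseteq> (\<Union>f\<in>F. f ` A)" using A by (rule equalityD1)
  have Bs: "(\<Union>f\<in>F. f ` B) \<subseteq> B" using B by (rule equalityD2)
  have claim: "\<forall>x\<in>A. \<exists>y\<in>B. \<bar>x - y\<bar> \<le> c ^ k * (2 * R)" for k
  proof (induction k)
    case 0
    show ?case
    proof
      fix x assume "x \<in> A"
      then have "\<bar>x\<bar> \<le> R" "\<bar>b\<bar> \<le> R" using R b by auto
      then have "\<bar>x - b\<bar> \<le> 2 * R" by linarith
      then show "\<exists>y\<in>B. \<bar>x - y\<bar> \<le> c ^ 0 * (2 * R)" using b by auto
    qed
  next
    case (Suc k)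
    show ?case
    proof
      fix x assume "x \<in> A"
      then obtain f x0 where f: "f \<in> F" "x0 \<in> A" "x = f x0" using As by blast
      then obtain y0 where y0: "y0 \<in> B" "\<bar>x0 - y0\<bar> \<le> c ^ k * (2 * R)" using Suc by blast
      have "f y0 \<in> B" using Bs f y0 by blast
      moreover have "\<bar>x - f y0\<bar> \<le> c * \<bar>x0 - y0\<bar>" using lip f by auto
      moreover have "c * \<bar>x0 - y0\<bar> \<le> c * (c ^ k * (2 * R))" using y0 c by (intro mult_left_mono) auto
      ultimately show "\<exists>y\<in>B. \<bar>x - y\<bar> \<le> c ^ Suc k * (2 * R)" by (intro bexI[of _ "f y0"]) auto
    qed
  qed
  show ?thesis
  proof
    fix x assume x: "x \<in> A"
    have "\<exists>y\<in>B. dist y x < e" if e: "e > 0" for e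
    proof -
      obtain k where k: "c ^ k < e / (2 * R + 1)" using real_arch_pow_inv[of "e / (2 * R + 1)" c] e c R0 by auto
      obtain y where y: "y \<in> B" "\<bar>x - y\<bar> \<le> c ^ k * (2 * R)" using claim x by blast
      have "c ^ k * (2 * R) \<le> c ^ k * (2 * R + 1)" using c by (intro mult_left_mono) auto
      also have "\<dots> < e" using k R0 by (simp add: field_simps)
      finally have "\<bar>y - x\<bar> < e" using y by (simp add: abs_minus_commute)
      then show ?thesis using y(1) by (auto simp: dist_real_def)
    qed
    then show "x \<in> B" using cB closed_approachable by blast
  qed
qed

lemma (in prm) K_eq: "K_pqr p q r = Kst r p q"
proof -
  let ?F = "{S1 p q r, S2 p q r, S3 p q r, S4 p q r, S5 p q r, S6 p q r}"
  have F: "?F = (\<lambda>f. f p q r) ` SF" by (simp add: SF_def)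
  have lip: "\<forall>f\<in>?F. \<forall>x y. \<bar>f x - f y\<bar> \<le> r * \<bar>x - y\<bar>"
    unfolding F using SF_lip p0 pr q0 qr by blast
  have fixK: "Kst r p q = (\<Union>f\<in>?F. f ` Kst r p q)" unfolding F using Kst_fix by auto
  have r01: "0 \<le> r" "r < 1" using p0 pr r36 by auto
  show ?thesis unfolding K_pqr_def attractor_def
  proof (rule the_equality)
    show "compact (Kst r p q) \<and> Kst r p q \<noteq> {} \<and> Kst r p q = (\<Union>f\<in>?F. f ` Kst r p q)"
      using Kst_compact zero_Kst fixK by blast
  next
    fix K assume K: "compact K \<and> K \<noteq> {} \<and> K = (\<Union>f\<in>?F. f ` K)"
    show "K = Kst r p q"
    proof
      have K1: "compact K" "K \<noteq> {}" "K = (\<Union>f\<in>?F. f ` K)" using K by auto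
      show "K \<subseteq> Kst r p q"
        by (rule fix_sub[OF lip r01 K1(3) fixK]) (use K1 Kst_compact zero_Kst compact_imp_bounded compact_imp_closed in auto)
      show "Kst r p q \<subseteq> K" 
        by (rule fix_sub[OF lip r01 fixK K1(3)]) (use K1 Kst_compact zero_Kst compact_imp_bounded compact_imp_closed in auto)
    qed
  qed
qed



lemma Phi_qlip:
  assumes "0 < p" "p < r" "0 < q1" "q1 < r" "0 < q2" "q2 < r" "r < 1/36"
    and "g \<in> Phi r k" "0 \<le> s" "s \<le> 1"
  shows "\<bar>g p q2 s - g p q1 s\<bar> \<le> 36/35 * \<bar>q2 - q1\<bar>"
  using assms(8)
proof (induction k arbitrary: g)
  case 0 then show ?case by simp
next
  case (Suc k)
  then obtain f g0 where f: "f \<in> SF" "g0 \<in> Phi r k" "g = (\<lambda>p q s. f p q r (g0 p q s))" by auto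
  interpret P1: prm p q1 r using assms by unfold_locales auto
  have x1: "0 \<le> g0 p q1 s" "g0 p q1 s \<le> 1" using P1.Phi_into[OF f(2)] assms by auto
  have "\<bar>g p q2 s - g p q1 s\<bar> \<le> r * \<bar>g0 p q2 s - g0 p q1 s\<bar> + \<bar>q2 - q1\<bar>"
    using SF_qlip[OF f(1) assms(1,2,3,4,5,6) x1] f(3) by simp
  also have "\<dots> \<le> r * (36/35 * \<bar>q2 - q1\<bar>) + \<bar>q2 - q1\<bar>"
    using Suc.IH[OF f(2)] assms by (intro add_right_mono mult_left_mono) auto
  also have "\<dots> \<le> 36/35 * \<bar>q2 - q1\<bar>"
  proof -
    have "r * (36/35 * \<bar>q2 - q1\<bar>) \<le> (1/36) * (36/35 * \<bar>q2 - q1\<bar>)"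
      using assms by (intro mult_right_mono) auto
    then show ?thesis by simp
  qed
  finally show ?case .
qed

lemma Phi_cont: "g \<in> Phi r k \<Longrightarrow> continuous_on UNIV (\<lambda>z::real\<times>real. g (fst z) (snd z) s)"
proof (induction k arbitrary: g)
  case 0 then show ?case by (simp add: continuous_on_const)
next
  case (Suc k)
  then obtain f g0 where f: "f \<in> SF" "g0 \<in> Phi r k" "g = (\<lambda>p q s. f p q r (g0 p q s))" by auto
  show ?case using SF_cont[OF f(1) Suc.IH[OF f(2)]] f(3) by simp
qed

context prm begin

lemma low: assumes "x \<in> Kst r p q" "x < aa" shows "\<exists>x1\<in>Kst r p q. x = p * x1"
proof -
  obtain f x1 where f: "f \<in> SF" "x1 \<in> Kst r p q" "x = f p q r x1"
    using assms(1) Kst_fix by blast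
  have x1: "0 \<le> x1" "x1 \<le> 1" using f(2) Kst_sub by auto
  have mm: "q * x1 \<le> q" "r * x1 \<le> r" "0 \<le> r * x1" using x1 q0 p0 pr by (auto intro: mult_left_le)
  then have "f = S1" using f assms(2) x1 p0 pr q0 qr r36 unfolding SF_def
    by (auto simp: S1_def S2_def S3_def S4_def S5_def S6_def hh_def aa_def) (use mm pr qr in linarith)+
  then show ?thesis using f by (auto simp: S1_def)
qed

lemma high: assumes "y \<in> Kst r p q" "y > 1 - aa" shows "\<exists>y1\<in>Kst r p q. y = 1 - r + r * y1"
proof -
  obtain f y1 where f: "f \<in> SF" "y1 \<in> Kst r p q" "y = f p q r y1"
    using assms(1) Kst_fix by blast
  have x1: "0 \<le> y1" "y1 \<le> 1" using f(2) Kst_sub by auto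
  have mm: "q * y1 \<le> q" "r * y1 \<le> r" "0 \<le> r * y1" "p * y1 \<le> p" "0 \<le> q * y1"
    using x1 q0 p0 pr by (auto intro: mult_left_le)
  then have "f = S6" using f assms(2) x1 p0 pr q0 qr r36 unfolding SF_def
    by (auto simp: S1_def S2_def S3_def S4_def S5_def S6_def hh_def aa_def) (use mm pr qr r36 in linarith)+
  then show ?thesis using f by (auto simp: S6_def)
qed

lemma decx_aux: "x \<in> Kst r p q \<Longrightarrow> x > p ^ N \<Longrightarrow> \<exists>n x'. x' \<in> Kst r p q \<and> aa \<le> x' \<and> x = p ^ n * x'"
proof (induction N arbitrary: x)
  case 0
  then have "aa \<le> x" by (simp add: aa_def)
  then show ?case using 0 by (intro exI[of _ 0] exI[of _ x]) auto
next
  case (Suc N)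
  show ?case
  proof (cases "aa \<le> x")
    case True then show ?thesis using Suc by (intro exI[of _ 0] exI[of _ x]) auto
  next
    case False
    then obtain x1 where x1: "x1 \<in> Kst r p q" "x = p * x1" using low Suc by force
    have "p * p ^ N < p * x1" using Suc.prems x1 by simp
    then have "p ^ N < x1" using p0 by simp
    then obtain n x' where "x' \<in> Kst r p q" "aa \<le> x'" "x1 = p ^ n * x'" using Suc.IH x1 by blast
    then show ?thesis using x1 by (intro exI[of _ "Suc n"] exI[of _ x']) auto
  qed
qed

lemma decx: assumes "x \<in> Kst r p q" "x > 0" shows "\<exists>n x'. x' \<in> Kst r p q \<and> aa \<le> x' \<and> x = p ^ n * x'"
proof -
  obtain N where "p ^ N < x" using real_arch_pow_inv[of x p] assms p0 pr r36 by auto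
  then show ?thesis using decx_aux assms by blast
qed

lemma decy_aux: "y \<in> Kst r p q \<Longrightarrow> 1 - y > r ^ N \<Longrightarrow> \<exists>m y'. y' \<in> Kst r p q \<and> y' \<le> 1 - aa \<and> 1 - y = r ^ m * (1 - y')"
proof (induction N arbitrary: y)
  case 0
  then have "y \<le> 1 - aa" using zero_Kst Kst_sub by (simp add: aa_def)
  then show ?case using 0 by (intro exI[of _ 0] exI[of _ y]) auto
next
  case (Suc N)
  show ?case
  proof (cases "y \<le> 1 - aa")
    case True then show ?thesis using Suc by (intro exI[of _ 0] exI[of _ y]) auto
  next
    case False
    then obtain y1 where y1: "y1 \<in> Kst r p q" "y = 1 - r + r * y1" using high Suc by force
    have e: "1 - y = r * (1 - y1)" using y1 by (simp add: algebra_simps)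
    have "r * r ^ N < r * (1 - y1)" using Suc.prems e by simp
    then have "r ^ N < 1 - y1" using p0 pr by simp
    then obtain m y' where "y' \<in> Kst r p q" "y' \<le> 1 - aa" "1 - y1 = r ^ m * (1 - y')" using Suc.IH y1 by blast
    then show ?thesis using e by (intro exI[of _ "Suc m"] exI[of _ y']) auto
  qed
qed

lemma decy: assumes "y \<in> Kst r p q" "y < 1" shows "\<exists>m y'. y' \<in> Kst r p q \<and> y' \<le> 1 - aa \<and> 1 - y = r ^ m * (1 - y')"
proof -
  obtain N where "r ^ N < 1 - y" using real_arch_pow_inv[of "1 - y" r] assms p0 pr r36 by auto
  then show ?thesis using decy_aux assms by blast
qed

lemma bad:
  assumes "\<not> unique_one_point p q r"
  shows "\<exists>n m x' y'. x' \<in> Kst r p q \<and> aa \<le> x' \<and> y' \<in> Kst r p q \<and> y' \<le> 1 - aa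
     \<and> q * p ^ n * x' = r ^ (m + 1) * (1 - y')"
proof -
  have h3: "hh \<in> S3 p q r ` Kst r p q" using zero_Kst by (force simp: S3_def)
  have h4: "hh \<in> S4 p q r ` Kst r p q" using one_Kst by (force simp: S4_def)
  obtain z where z: "z \<in> S3 p q r ` Kst r p q" "z \<in> S4 p q r ` Kst r p q" "z \<noteq> hh"
    using assms h3 h4 unfolding unique_one_point_def K_eq by blast
  obtain x y where xy: "x \<in> Kst r p q" "y \<in> Kst r p q" "z = hh - q * x" "z = hh - r + r * y"
    using z by (auto simp: S3_def S4_def)
  have "x \<noteq> 0" using xy z(3) by auto
  moreover have "x \<ge> 0" using xy(1) Kst_sub by auto
  ultimately have x0: "x > 0" by simp
  have e: "q * x = r * (1 - y)" using xy by (simp add: algebra_simps)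
  have "q * x > 0" using x0 q0 by simp
  then have "0 < r * (1 - y)" using e by simp
  then have "0 < 1 - y" using p0 pr zero_less_mult_pos[of r "1 - y"] by simp
  then have "y < 1" by simp
  obtain n x' where x': "x' \<in> Kst r p q" "aa \<le> x'" "x = p ^ n * x'" using decx xy x0 by blast
  obtain m y' where y': "y' \<in> Kst r p q" "y' \<le> 1 - aa" "1 - y = r ^ m * (1 - y')" using decy xy \<open>y < 1\<close> by blast
  have "q * p ^ n * x' = r ^ (m + 1) * (1 - y')" using e x' y' by (simp add: algebra_simps)
  then show ?thesis using x' y' by blast
qed

end



lemma arith1:
  fixes P D qq R Xa Xb Ya Yb E :: real
  assumes "P > 0" "D > 0" "0 < qq" "qq < 1/36" "0 \<le> R" "R \<le> 5*qq*P" "Xb \<ge> 1/5 - 1/1296"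
    "\<bar>Xb - Xa\<bar> \<le> 36/35*D" "\<bar>Yb - Ya\<bar> \<le> 36/35*D"
    "\<bar>qq*P*Xa - R*(1-Ya)\<bar> \<le> E" "\<bar>(qq+D)*P*Xb - R*(1-Yb)\<bar> \<le> E"
  shows "D * P \<le> 100 * E"
proof -
  define u where "u = qq * P * D"
  have u0: "0 \<le> u" using assms unfolding u_def by simp
  have a: "qq*P*(Xb-Xa) \<ge> - (36/35 * u)"
  proof -
    have "Xb - Xa \<ge> -(36/35*D)" using assms(8) abs_ge_minus_self[of "Xb - Xa"] by linarith
    then have "qq*P*(Xb-Xa) \<ge> qq*P*(-(36/35*D))" using assms by (intro mult_left_mono) auto
    then show ?thesis unfolding u_def by (simp add: algebra_simps)
  qed
  have b: "R*(Yb-Ya) \<ge> - (36/7 * u)"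
  proof -
    have "Yb - Ya \<ge> -(36/35*D)" using assms(9) abs_ge_minus_self[of "Yb - Ya"] by linarith
    then have "R*(Yb-Ya) \<ge> R*(-(36/35*D))" using assms by (intro mult_left_mono) auto
    moreover have "R*(36/35*D) \<le> (5*qq*P)*(36/35*D)" using assms by (intro mult_right_mono) auto
    ultimately show ?thesis unfolding u_def by (simp add: algebra_simps)
  qed
  have c0: "D*P*Xb \<ge> D*P*(1/5 - 1/1296)" using assms by (intro mult_left_mono) auto
  have c: "D*P*Xb \<ge> (1291/6480) * (D*P)" using c0 by (simp add: mult.commute)
  have d0: "u \<le> (1/36) * (P * D)" unfolding u_def using assms
    by (simp add: mult.assoc) 
  have d: "u \<le> (D * P) / 36" using d0 by (simp add: mult.commute)
  have idt: "(qq+D)*P*Xb - R*(1-Yb) - (qq*P*Xa - R*(1-Ya)) = D*P*Xb + qq*P*(Xb-Xa) + R*(Yb-Ya)"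
    by (simp add: algebra_simps)
  have "(qq+D)*P*Xb - R*(1-Yb) - (qq*P*Xa - R*(1-Ya)) \<le> 2 * E" using assms(10,11) by linarith
  then have "D*P*Xb + qq*P*(Xb-Xa) + R*(Yb-Ya) \<le> 2 * E" using idt by linarith
  moreover have gen: "\<And>(t::real) (a::real) (b::real) (w::real) (u::real) (e::real). t + a + b \<le> 2*e \<Longrightarrow> -(36/35*u) \<le> a \<Longrightarrow> -(36/7*u) \<le> b
     \<Longrightarrow> (1291/6480)*w \<le> t \<Longrightarrow> u \<le> w/36 \<Longrightarrow> 0 \<le> u \<Longrightarrow> w \<le> 100*e" by linarith
  ultimately show ?thesis using a b c d u0 by blast
qed

lemma arith2:
  fixes Q R x y G H \<rho> :: real
  assumes "0 \<le> Q" "0 \<le> R" "Q * x = R * (1 - y)" "x \<le> 1" "1 - y \<ge> 1/5" "\<bar>G - x\<bar> \<le> \<rho>" "\<bar>H - y\<bar> \<le> \<rho>" "0 \<le> \<rho>"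
  shows "R \<le> 5 * Q" "\<bar>Q * G - R * (1 - H)\<bar> \<le> 6 * Q * \<rho>"
proof -
  have "R * (1/5) \<le> R * (1 - y)" using assms by (intro mult_left_mono) auto
  also have "\<dots> = Q * x" using assms by simp
  also have "\<dots> \<le> Q * 1" using assms by (intro mult_left_mono) auto
  finally show R5: "R \<le> 5 * Q" by simp
  have "Q * G - R * (1 - H) = Q * (G - x) + R * (H - y)" using assms(3) by (simp add: algebra_simps)
  then have "\<bar>Q * G - R * (1 - H)\<bar> \<le> \<bar>Q * (G - x)\<bar> + \<bar>R * (H - y)\<bar>" by simp
  also have "\<dots> = Q * \<bar>G - x\<bar> + R * \<bar>H - y\<bar>" using assms by (simp add: abs_mult)
  also have "\<dots> \<le> Q * \<rho> + (5 * Q) * \<rho>" using assms R5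
    by (intro add_mono mult_mono) auto
  finally show "\<bar>Q * G - R * (1 - H)\<bar> \<le> 6 * Q * \<rho>" by simp
qed

definition T2 :: "real \<Rightarrow> nat \<Rightarrow> nat \<Rightarrow> nat \<Rightarrow> (real\<Rightarrow>real\<Rightarrow>real\<Rightarrow>real) \<Rightarrow> (real\<Rightarrow>real\<Rightarrow>real\<Rightarrow>real) \<Rightarrow> (real \<times> real) set" where
  "T2 r n m k g g' = {(p,q). 0 < p \<and> p < r \<and> 0 < q \<and> q < r \<and> r^(m+1) \<le> 5*q*p^n \<and> aa - r^k \<le> g p q 0
      \<and> \<bar>q*p^n*g p q 0 - r^(m+1)*(1 - g' p q 0)\<bar> \<le> 6*p^n*r^(k+1)}"

lemma T2_diam:
  assumes r: "0 < r" "r < 1/36" and k: "2 \<le> k" and g: "g \<in> Phi r k" "g' \<in> Phi r k"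
    and q1: "(p,q1) \<in> T2 r n m k g g'" and q2: "(p,q2) \<in> T2 r n m k g g'" and lt: "q1 < q2"
  shows "q2 - q1 \<le> 600 * r^(k+1)"
proof -
  have h1: "0 < p" "p < r" "0 < q1" "q1 < r" "r^(m+1) \<le> 5*q1*p^n"
     "\<bar>q1*p^n*g p q1 0 - r^(m+1)*(1 - g' p q1 0)\<bar> \<le> 6*p^n*r^(k+1)"
    using q1 unfolding T2_def by auto
  have h2: "0 < q2" "q2 < r" "aa - r^k \<le> g p q2 0"
     "\<bar>q2*p^n*g p q2 0 - r^(m+1)*(1 - g' p q2 0)\<bar> \<le> 6*p^n*r^(k+1)"
    using q2 unfolding T2_def by auto
  have rk: "r^k \<le> r^2" using r k by (intro power_decreasing) auto
  have "r^2 < (1/36)^2" using r by (intro power_strict_mono) auto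
  then have "r^k \<le> 1/1296" using rk by (simp add: power2_eq_square)
  then have X2: "g p q2 0 \<ge> 1/5 - 1/1296" using h2(3) by (simp add: aa_def)
  have L1: "\<bar>g p q2 0 - g p q1 0\<bar> \<le> 36/35 * (q2 - q1)"
    using Phi_qlip[OF h1(1,2,3,4) h2(1,2) r(2) g(1)] lt by simp
  have L2: "\<bar>g' p q2 0 - g' p q1 0\<bar> \<le> 36/35 * (q2 - q1)"
    using Phi_qlip[OF h1(1,2,3,4) h2(1,2) r(2) g(2)] lt by simp
  have "(q2 - q1) * p^n \<le> 100 * (6*p^n*r^(k+1))"
    by (rule arith1[where qq=q1 and R="r^(m+1)" and Xa="g p q1 0" and Xb="g p q2 0" and Ya="g' p q1 0" and Yb="g' p q2 0"])
      (use h1 h2 X2 L1 L2 lt r in auto)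
  then have "(q2 - q1) * p^n \<le> (600 * r^(k+1)) * p^n" by (simp add: algebra_simps)
  then show ?thesis using h1(1) by simp
qed



lemma sets_pair_borel: "sets (lborel \<Otimes>\<^sub>M lborel :: (real \<times> real) measure) = sets borel"
  by (simp only: lborel_prod sets_lborel)

lemma T2_borel:
  assumes "g \<in> Phi r k" "g' \<in> Phi r k"
  shows "T2 r n m k g g' \<in> sets borel"
proof -
  have cg: "continuous_on UNIV (\<lambda>z::real\<times>real. g (fst z) (snd z) 0)" using Phi_cont[OF assms(1)] .
  have cg': "continuous_on UNIV (\<lambda>z::real\<times>real. g' (fst z) (snd z) 0)" using Phi_cont[OF assms(2)] .
  have eq: "T2 r n m k g g' = ({0<..<r} \<times> {0<..<r}) \<inter> {z. r^(m+1) \<le> 5 * snd z*fst z^n}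
     \<inter> {z. aa - r^k \<le> g (fst z) (snd z) 0}
     \<inter> {z. \<bar>snd z*fst z^n*g (fst z) (snd z) 0 - r^(m+1)*(1 - g' (fst z) (snd z) 0)\<bar> \<le> 6*fst z^n*r^(k+1)}"
    unfolding T2_def by auto
  have o: "open ({0<..<r} \<times> {0<..<(r::real)})" by (intro open_Times) auto
  have c1: "closed {z::real\<times>real. r^(m+1) \<le> 5 * snd z*fst z^n}"
    by (intro closed_Collect_le continuous_intros)
  have c2: "closed {z::real\<times>real. aa - r^k \<le> g (fst z) (snd z) 0}"
    by (intro closed_Collect_le continuous_intros cg)
  have c3: "closed {z::real\<times>real. \<bar>snd z*fst z^n*g (fst z) (snd z) 0 - r^(m+1)*(1 - g' (fst z) (snd z) 0)\<bar> \<le> 6*fst z^n*r^(k+1)}"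
    by (intro closed_Collect_le continuous_intros cg cg')
  show ?thesis unfolding eq
    by (intro sets.Int borel_open borel_closed o c1 c2 c3)
qed

lemma sec_T2:
  assumes r: "0 < r" "r < 1/36" and k: "2 \<le> k" and g: "g \<in> Phi r k" "g' \<in> Phi r k"
  shows "emeasure lborel (Pair p -` T2 r n m k g g') \<le> ennreal (1200 * r^(k+1))"
proof (cases "Pair p -` T2 r n m k g g' = {}")
  case True then show ?thesis by simp
next
  case False
  then obtain q0 where q0: "(p, q0) \<in> T2 r n m k g g'" by auto
  define d where "d = 600 * r^(k+1)"
  have "Pair p -` T2 r n m k g g' \<subseteq> {q0 - d .. q0 + d}"
  proof
    fix q assume q: "q \<in> Pair p -` T2 r n m k g g'"
    then have q': "(p,q) \<in> T2 r n m k g g'" by simp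
    consider "q < q0" | "q = q0" | "q0 < q" by linarith
    then show "q \<in> {q0 - d .. q0 + d}"
    proof cases
      case 1 then have "q0 - q \<le> d" unfolding d_def using T2_diam[OF r k g q' q0] by simp
      then show ?thesis using 1 by simp
    next
      case 2 then show ?thesis using r by (simp add: d_def)
    next
      case 3 then have "q - q0 \<le> d" unfolding d_def using T2_diam[OF r k g q0 q'] by simp
      then show ?thesis using 3 by simp
    qed
  qed
  then have "emeasure lborel (Pair p -` T2 r n m k g g') \<le> emeasure lborel {q0 - d .. q0 + d}"
    by (intro emeasure_mono) auto
  also have "\<dots> = ennreal (1200 * r^(k+1))" using r unfolding d_def by simp
  finally show ?thesis .
qed

definition U :: "real \<Rightarrow> nat \<Rightarrow> nat \<Rightarrow> nat \<Rightarrow> (real \<times> real) set" where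
  "U r n m k = (\<Union>gg\<in>Phi r k \<times> Phi r k. T2 r n m k (fst gg) (snd gg))"

lemma U_borel: "U r n m k \<in> sets borel"
  unfolding U_def using T2_borel Phi_finite
  by (intro sets.finite_UN) auto

lemma sec_U:
  assumes r: "0 < r" "r < 1/36" and k: "2 \<le> k"
  shows "emeasure lborel (Pair p -` U r n m k) \<le> ennreal (36^k * (1200 * r^(k+1)))"
proof -
  let ?I = "Phi r k \<times> Phi r k"
  have fin: "finite ?I" using Phi_finite by simp
  have eq: "Pair p -` U r n m k = (\<Union>gg\<in>?I. Pair p -` T2 r n m k (fst gg) (snd gg))"
    unfolding U_def by auto
  have ms: "(\<lambda>gg. Pair p -` T2 r n m k (fst gg) (snd gg)) ` ?I \<subseteq> sets lborel"
  proof clarify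
    fix g g' assume "g \<in> Phi r k" "g' \<in> Phi r k"
    then have "T2 r n m k g g' \<in> sets (lborel \<Otimes>\<^sub>M lborel)" using T2_borel sets_pair_borel by auto
    then show "Pair p -` T2 r n m k (fst (g, g')) (snd (g, g')) \<in> sets lborel" by (simp add: sets_Pair1)
  qed
  have "emeasure lborel (Pair p -` U r n m k) \<le> (\<Sum>gg\<in>?I. emeasure lborel (Pair p -` T2 r n m k (fst gg) (snd gg)))"
    unfolding eq by (rule emeasure_subadditive_finite[OF fin ms])
  also have "\<dots> \<le> (\<Sum>gg\<in>?I. ennreal (1200 * r^(k+1)))"
    by (intro sum_mono) (use sec_T2[OF r k] in auto)
  also have "\<dots> = ennreal (real (card ?I) * (1200 * r^(k+1)))"
    using r by (simp add: ennreal_of_nat_eq_real_of_nat ennreal_mult)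
  also have "\<dots> \<le> ennreal (36^k * (1200 * r^(k+1)))"
  proof (intro ennreal_leI mult_right_mono)
    have "card ?I = card (Phi r k) * card (Phi r k)" by (simp add: card_cartesian_product)
    also have "\<dots> \<le> 6^k * 6^k" using Phi_card by (intro mult_mono) auto
    also have "\<dots> = 36^k" by (simp add: power_mult_distrib[symmetric])
    finally have "card ?I \<le> (36::nat)^k" .
    then show "real (card ?I) \<le> 36^k" by (metis of_nat_le_iff of_nat_numeral of_nat_power)
  qed (use r in auto)
  finally show ?thesis .
qed



definition Nset :: "real \<Rightarrow> (real \<times> real) set" where
  "Nset r = (\<Union>n. \<Union>m. \<Inter>k. U r n m (k+2))"

lemma Nset_borel: "Nset r \<in> sets borel"
  unfolding Nset_def using U_borel
  by (intro sets.countable_UN sets.countable_INT) auto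

lemma Nsec_null:
  assumes r: "0 < r" "r < 1/36"
  shows "Pair p -` Nset r \<in> null_sets lborel"
proof -
  have eq: "Pair p -` Nset r = (\<Union>n. \<Union>m. \<Inter>k. Pair p -` U r n m (k+2))"
    unfolding Nset_def by auto
  have ms: "Pair p -` U r n m k \<in> sets lborel" for n m k
  proof -
    have "U r n m k \<in> sets (lborel \<Otimes>\<^sub>M lborel)" using U_borel sets_pair_borel by auto
    then show ?thesis by (simp add: sets_Pair1)
  qed
  have "(\<Inter>k. Pair p -` U r n m (k+2)) \<in> null_sets lborel" for n m
  proof (rule null_setsI)
    let ?I = "\<Inter>k. Pair p -` U r n m (k+2)"
    show "?I \<in> sets lborel" using ms by (intro sets.countable_INT) auto
    have bnd: "emeasure lborel ?I \<le> ennreal ((36*r)^k * (36^2 * 1200 * r^3))" for k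
    proof -
      have "emeasure lborel ?I \<le> emeasure lborel (Pair p -` U r n m (k+2))"
        using ms by (intro emeasure_mono) auto
      also have "\<dots> \<le> ennreal (36^(k+2) * (1200 * r^(k+2+1)))" using sec_U[OF r, of "k+2" p n m] by simp
      also have "36^(k+2) * (1200 * r^(k+2+1)) = (36*r)^k * (36^2 * 1200 * r^3)"
        by (simp add: power_add power_mult_distrib algebra_simps power3_eq_cube)
      finally show ?thesis .
    qed
    have "emeasure lborel ?I \<le> 0"
    proof (rule ennreal_le_epsilon)
      fix e :: real assume e: "0 < e"
      define C where "C = (36^2 * 1200 * r^3 :: real)"
      have C: "C > 0" using r unfolding C_def by simp
      obtain k where k: "(36*r)^k < e / C" using real_arch_pow_inv[of "e / C" "36*r"] e C r by auto
      then have "(36*r)^k * C < e" using C by (simp add: field_simps)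
      then have "emeasure lborel ?I \<le> ennreal e" using bnd[of k] unfolding C_def
        by (meson ennreal_leI less_imp_le order_trans)
      then show "emeasure lborel ?I \<le> 0 + ennreal e" by simp
    qed
    then show "emeasure lborel ?I = 0" by simp
  qed
  then show ?thesis unfolding eq by (intro null_sets_UN)
qed

lemma bad_sub:
  assumes r: "0 < r" "r < 1/36" and pq: "0 < p" "p < r" "0 < q" "q < r"
    and nb: "\<not> unique_one_point p q r"
  shows "(p, q) \<in> Nset r"
proof -
  interpret prm p q r using r pq by unfold_locales auto
  obtain n m x' y' where b: "x' \<in> Kst r p q" "aa \<le> x'" "y' \<in> Kst r p q" "y' \<le> 1 - aa"
     "q * p ^ n * x' = r ^ (m + 1) * (1 - y')" using bad[OF nb] by blast
  have inU: "(p, q) \<in> U r n m k" for k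
  proof -
    have "x' \<in> AA r k p q" "y' \<in> AA r k p q" using b unfolding Kst_def by auto
    then obtain g s g' t where gs: "g \<in> Phi r k" "s \<in> {0..1}" "x' = g p q s"
      and gt: "g' \<in> Phi r k" "t \<in> {0..1}" "y' = g' p q t" unfolding AA_def by blast
    have rk: "0 \<le> r^k" using r by simp
    have "\<bar>g p q 0 - g p q s\<bar> \<le> r^k * \<bar>0 - s\<bar>" by (rule Phi_lip[OF gs(1)])
    also have "\<dots> \<le> r^k * 1" using gs(2) rk by (intro mult_left_mono) auto
    finally have G: "\<bar>g p q 0 - x'\<bar> \<le> r^k" using gs by simp
    have "\<bar>g' p q 0 - g' p q t\<bar> \<le> r^k * \<bar>0 - t\<bar>" by (rule Phi_lip[OF gt(1)])
    also have "\<dots> \<le> r^k * 1" using gt(2) rk by (intro mult_left_mono) auto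
    finally have H: "\<bar>g' p q 0 - y'\<bar> \<le> r^k" using gt by simp
    have Q0: "0 \<le> q * p ^ n" using pq by simp
    have x1: "x' \<le> 1" using b Kst_sub by auto
    have y1: "1 - y' \<ge> 1/5" using b by (simp add: aa_def)
    note A = arith2[OF Q0 _ b(5) x1 y1 G H rk]
    have c1: "r^(m+1) \<le> 5 * q * p^n" using A(1) r by (simp add: mult.assoc)
    have c2: "aa - r^k \<le> g p q 0" using G b(2) by (simp add: abs_le_iff)
    have "6 * (q * p^n) * r^k \<le> 6 * p^n * r^(k+1)"
    proof -
      have "6 * (q * p^n) * r^k = (6 * p^n * r^k) * q" by (simp add: algebra_simps)
      also have "\<dots> \<le> (6 * p^n * r^k) * r" using pq r by (intro mult_left_mono) auto
      finally show ?thesis by (simp add: algebra_simps)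
    qed
    then have c3: "\<bar>q*p^n*g p q 0 - r^(m+1)*(1 - g' p q 0)\<bar> \<le> 6*p^n*r^(k+1)"
      using A(2) r by (simp add: mult.assoc) 
    have "(p, q) \<in> T2 r n m k g g'" unfolding T2_def using pq c1 c2 c3 by auto
    then show ?thesis unfolding U_def using gs(1) gt(1) by force
  qed
  then show ?thesis unfolding Nset_def by blast
qed

theorem theorem4:
  fixes r :: real
  assumes "0 < r" "r < 1/36"
  shows "{(p, q) \<in> {0<..<r} \<times> {0<..<r}. \<not> unique_one_point p q r} \<in> null_sets lebesgue
    \<and> (\<forall>p \<in> {0<..<r}. {q \<in> {0<..<r}. \<not> unique_one_point p q r} \<in> null_sets lebesgue)"
proof
  have Nm: "Nset r \<in> sets (lborel \<Otimes>\<^sub>M lborel)" using Nset_borel sets_pair_borel by auto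
  have "emeasure (lborel \<Otimes>\<^sub>M lborel) (Nset r) = (\<integral>\<^sup>+x. emeasure lborel (Pair x -` Nset r) \<partial>lborel)"
    by (rule lborel.emeasure_pair_measure_alt[OF Nm])
  also have "\<dots> = (\<integral>\<^sup>+x. 0 \<partial>lborel)"
  proof -
    have "\<And>x. emeasure lborel (Pair x -` Nset r) = 0" using Nsec_null[OF assms] by auto
    then show ?thesis by simp
  qed
  finally have "Nset r \<in> null_sets (lborel \<Otimes>\<^sub>M lborel)" using Nm by auto
  then have N0: "Nset r \<in> null_sets (lborel :: (real \<times> real) measure)" by (simp only: lborel_prod)
  have "{(p, q) \<in> {0<..<r} \<times> {0<..<r}. \<not> unique_one_point p q r} \<subseteq> Nset r"
    using bad_sub[OF assms] by auto
  then show "{(p, q) \<in> {0<..<r} \<times> {0<..<r}. \<not> unique_one_point p q r} \<in> null_sets lebesgue"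
    using null_sets_completion_subset null_sets_completionI[OF N0] by blast
next
  show "\<forall>p \<in> {0<..<r}. {q \<in> {0<..<r}. \<not> unique_one_point p q r} \<in> null_sets lebesgue"
  proof
    fix p assume p: "p \<in> {0<..<r}"
    have "{q \<in> {0<..<r}. \<not> unique_one_point p q r} \<subseteq> Pair p -` Nset r"
      using bad_sub[OF assms] p by auto
    then show "{q \<in> {0<..<r}. \<not> unique_one_point p q r} \<in> null_sets lebesgue"
      using null_sets_completion_subset null_sets_completionI[OF Nsec_null[OF assms]] by blast
  qed
qed

end
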